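(* Let $p$ be a probability measure on $\mathbb{R}^d$ with $M:=\int_{\mathbb{R}^d}\|x\|^2\,p(dx)<\infty$, and let $(p_t)_{t\ge0}$ be the laws of the Ornstein--Uhlenbeck process $dX_t=-X_t\,dt+\sqrt2\,dB_t$, $X_0\sim p$. Then for $0<\tau<\frac{d}{M^2}$, $W_2(p,p_\tau)\le\sqrt{3\tau d}$.
   Context: $W_2$ denotes the 2-Wasserstein distance. *)

theory Defs
  imports "HOL-Probability.Probability"
begin

definition std_gaussian :: "'a::euclidean_space measure" where
  "std_gaussian = density lborel
     (\<lambda>x. ennreal ((2 * pi) powr (- real DIM('a) / 2) * exp (- (norm x)\<^sup>2 / 2)))"

text \<open>Law at time t of the Ornstein-Uhlenbeck process dX = -X dt + sqrt 2 dB, X_0 ~ p: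
  X_t = e^{-t} X_0 + sqrt(1 - e^{-2t}) Z with Z ~ N(0,I) independent of X_0.\<close>
definition OU_law :: "'a::euclidean_space measure \<Rightarrow> real \<Rightarrow> 'a measure" where
  "OU_law p t = distr (p \<Otimes>\<^sub>M std_gaussian) borel
     (\<lambda>(x, z). exp (- t) *\<^sub>R x + sqrt (1 - exp (- 2 * t)) *\<^sub>R z)"

definition couplings :: "'a::euclidean_space measure \<Rightarrow> 'a measure \<Rightarrow> ('a \<times> 'a) measure set" where
  "couplings p q = {\<pi>. prob_space \<pi> \<and> sets \<pi> = sets (borel \<Otimes>\<^sub>M borel)
      \<and> distr \<pi> borel fst = p \<and> distr \<pi> borel snd = q}"

definition ennreal_sqrt :: "ennreal \<Rightarrow> ennreal" where
  "ennreal_sqrt c = (if c = \<infinity> then \<infinity> else ennreal (sqrt (enn2real c)))"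

definition W2 :: "'a::euclidean_space measure \<Rightarrow> 'a measure \<Rightarrow> ennreal" where
  "W2 p q = ennreal_sqrt (INF \<pi> \<in> couplings p q. \<integral>\<^sup>+ xy. ennreal ((norm (fst xy - snd xy))\<^sup>2) \<partial>\<pi>)"

end

theory Submission
  imports Defs
begin

lemma gauss_density_prod:
  fixes x :: "'a::euclidean_space"
  shows "(2 * pi) powr (- real DIM('a) / 2) * exp (- (norm x)\<^sup>2 / 2)
       = (\<Prod>b\<in>Basis. std_normal_density (x \<bullet> b))"
proof -
  have n: "(norm x)\<^sup>2 = (\<Sum>b\<in>Basis. (x \<bullet> b)\<^sup>2)"
    by (simp only: power2_norm_eq_inner euclidean_inner[of x x]) (simp add: power2_eq_square)
  have "exp (- (norm x)\<^sup>2 / 2) = (\<Prod>b\<in>Basis. exp (- (x \<bullet> b)\<^sup>2 / 2))"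
    unfolding n by (simp add: exp_sum[symmetric] sum_negf sum_divide_distrib)
  moreover have "(2 * pi) powr (- real DIM('a) / 2) = (\<Prod>b\<in>(Basis::'a set). 1 / sqrt (2 * pi))"
  proof -
    have "(\<Prod>b\<in>(Basis::'a set). 1 / sqrt (2 * pi)) = (1 / sqrt (2*pi)) ^ DIM('a)" by simp
    also have "\<dots> = ((2*pi) powr (-1/2)) ^ DIM('a)"
      by (simp add: powr_minus_divide powr_half_sqrt)
    also have "\<dots> = (2 * pi) powr (- real DIM('a) / 2)"
      by (simp add: powr_realpow[symmetric] powr_powr)
    finally show ?thesis by simp
  qed
  moreover have "(\<Prod>b\<in>Basis. std_normal_density (x \<bullet> b))
     = (\<Prod>b\<in>(Basis::'a set). 1 / sqrt (2 * pi)) * (\<Prod>b\<in>Basis. exp (- (x \<bullet> b)\<^sup>2 / 2))"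
    unfolding std_normal_density_def prod.distrib[symmetric] by simp
  ultimately show ?thesis by simp
qed

lemma std_normal_1d:
  fixes c s :: real
  shows "(\<integral>\<^sup>+ t. ennreal (std_normal_density t * (c - s * t)\<^sup>2) \<partial>lborel) = ennreal (c\<^sup>2 + s\<^sup>2)"
proof -
  have h: "has_bochner_integral lborel
     (\<lambda>t. c\<^sup>2 * (std_normal_density t * t ^ (2*0)) - (2 * c * s) * (std_normal_density t * t^(2*0+1))
          + s\<^sup>2 * (std_normal_density t * t^(2*1)))
     (c\<^sup>2 * (fact (2 * 0) / (2^0 * fact 0)) - (2 * c * s) * 0 + s\<^sup>2 * (fact (2 * 1) / (2^1 * fact 1)))"
    by (intro has_bochner_integral_add has_bochner_integral_diff has_bochner_integral_mult_right
        std_normal_moment_even std_normal_moment_odd)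
  have h2: "has_bochner_integral lborel (\<lambda>t. std_normal_density t * (c - s * t)\<^sup>2) (c\<^sup>2 + s\<^sup>2)"
    using h by (simp add: power2_eq_square algebra_simps)
  show ?thesis
    using h2
    by (subst nn_integral_eq_integral)
       (auto simp: has_bochner_integral_iff)
qed

lemma std_normal_1d_mass:
  "(\<integral>\<^sup>+ t. ennreal (std_normal_density t) \<partial>lborel) = 1"
  using std_normal_1d[of 1 0] by simp

lemma gauss_dens_meas[measurable]:
  "(\<lambda>x::'a::euclidean_space. ennreal ((2 * pi) powr (- real DIM('a) / 2) * exp (- (norm x)\<^sup>2 / 2))) \<in> borel_measurable borel"
  by measurable

lemma nn_integral_std_gaussian:
  fixes g :: "'a::euclidean_space \<Rightarrow> ennreal"
  assumes [measurable]: "g \<in> borel_measurable borel"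
  shows "(\<integral>\<^sup>+ z. g z \<partial>std_gaussian) = (\<integral>\<^sup>+ z. (\<Prod>b\<in>Basis. ennreal (std_normal_density (z \<bullet> b))) * g z \<partial>lborel)"
proof -
  have e: "ennreal ((2 * pi) powr (- real DIM('a) / 2) * exp (- (norm x)\<^sup>2 / 2))
     = (\<Prod>b\<in>Basis. ennreal (std_normal_density (x \<bullet> b)))" for x :: 'a
    by (subst prod_ennreal) (auto simp only: gauss_density_prod normal_density_nonneg)
  show ?thesis
    unfolding std_gaussian_def
    apply (subst nn_integral_density)
      apply measurable
    apply (rule nn_integral_cong)
    apply (rule arg_cong[where f="\<lambda>u. u * _"])
    apply (rule e)
    done
qed

lemma sets_std_gaussian[simp, measurable_cong]: "sets (std_gaussian :: 'a::euclidean_space measure) = sets borel"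
  by (simp add: std_gaussian_def)

lemma prob_space_std_gaussian: "prob_space (std_gaussian :: 'a::euclidean_space measure)"
proof
  have "emeasure (std_gaussian :: 'a measure) (space std_gaussian) = (\<integral>\<^sup>+ z. 1 \<partial>(std_gaussian :: 'a measure))"
    by simp
  also have "\<dots> = (\<integral>\<^sup>+ z. (\<Prod>b\<in>(Basis::'a set). ennreal (std_normal_density (z \<bullet> b))) \<partial>lborel)"
    by (subst nn_integral_std_gaussian) auto
  also have "\<dots> = (\<Prod>b\<in>(Basis::'a set). (\<integral>\<^sup>+ t. ennreal (std_normal_density t) \<partial>lborel))"
    by (rule nn_integral_lborel_prod) auto
  also have "\<dots> = 1" by (simp add: std_normal_1d_mass)
  finally show "emeasure (std_gaussian :: 'a measure) (space std_gaussian) = 1" .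
qed

lemma gauss_coord:
  fixes v :: "'a::euclidean_space" and s :: real
  assumes b0: "b0 \<in> Basis"
  shows "(\<integral>\<^sup>+ z. ennreal ((v \<bullet> b0 - s * (z \<bullet> b0))\<^sup>2) \<partial>std_gaussian) = ennreal ((v \<bullet> b0)\<^sup>2 + s\<^sup>2)"
proof -
  define g where "g b t = ennreal (std_normal_density t) * (if b = b0 then ennreal ((v \<bullet> b0 - s * t)\<^sup>2) else 1)" for b t
  have "(\<integral>\<^sup>+ z. ennreal ((v \<bullet> b0 - s * (z \<bullet> b0))\<^sup>2) \<partial>std_gaussian)
      = (\<integral>\<^sup>+ z. (\<Prod>b\<in>Basis. ennreal (std_normal_density (z \<bullet> b))) * ennreal ((v \<bullet> b0 - s * (z \<bullet> b0))\<^sup>2) \<partial>lborel)"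
    by (subst nn_integral_std_gaussian) auto
  also have "\<dots> = (\<integral>\<^sup>+ z. (\<Prod>b\<in>Basis. g b (z \<bullet> b)) \<partial>lborel)"
    by (rule nn_integral_cong) (simp add: g_def prod.distrib prod.delta b0)
  also have "\<dots> = (\<Prod>b\<in>Basis. (\<integral>\<^sup>+ t. g b t \<partial>lborel))"
    by (rule nn_integral_lborel_prod) (auto simp: g_def)
  also have "\<dots> = (\<Prod>b\<in>Basis. (if b = b0 then ennreal ((v \<bullet> b0)\<^sup>2 + s\<^sup>2) else 1))"
  proof (rule prod.cong[OF refl])
    fix b assume "b \<in> (Basis::'a set)"
    show "(\<integral>\<^sup>+ t. g b t \<partial>lborel) = (if b = b0 then ennreal ((v \<bullet> b0)\<^sup>2 + s\<^sup>2) else 1)"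
      using std_normal_1d[of "v \<bullet> b0" s]
      by (simp add: g_def std_normal_1d_mass ennreal_mult'[symmetric])
  qed
  also have "\<dots> = ennreal ((v \<bullet> b0)\<^sup>2 + s\<^sup>2)" by (simp add: prod.delta b0)
  finally show ?thesis .
qed

lemma gauss_sq:
  fixes v :: "'a::euclidean_space" and s :: real
  shows "(\<integral>\<^sup>+ z. ennreal ((norm (v - s *\<^sub>R z))\<^sup>2) \<partial>std_gaussian) = ennreal ((norm v)\<^sup>2 + s\<^sup>2 * DIM('a))"
proof -
  have n: "(norm w)\<^sup>2 = (\<Sum>b\<in>Basis. (w \<bullet> b)\<^sup>2)" for w :: 'a
    by (simp only: power2_norm_eq_inner euclidean_inner[of w w]) (simp add: power2_eq_square)
  have "(\<integral>\<^sup>+ z. ennreal ((norm (v - s *\<^sub>R z))\<^sup>2) \<partial>std_gaussian)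
      = (\<integral>\<^sup>+ z. (\<Sum>b\<in>Basis. ennreal ((v \<bullet> b - s * (z \<bullet> b))\<^sup>2)) \<partial>std_gaussian)"
    by (rule nn_integral_cong) (subst n, simp add: inner_diff_left)
  also have "\<dots> = (\<Sum>b\<in>Basis. (\<integral>\<^sup>+ z. ennreal ((v \<bullet> b - s * (z \<bullet> b))\<^sup>2) \<partial>std_gaussian))"
    by (rule nn_integral_sum) auto
  also have "\<dots> = (\<Sum>b\<in>Basis. ennreal ((v \<bullet> b)\<^sup>2 + s\<^sup>2))"
    by (rule sum.cong) (auto simp: gauss_coord)
  also have "\<dots> = ennreal ((norm v)\<^sup>2 + s\<^sup>2 * DIM('a))"
    apply (subst sum_ennreal)
     apply simp
    apply (rule arg_cong[where f=ennreal])
    apply (simp add: n[of v] sum.distrib)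
    done
  finally show ?thesis .
qed

lemma arith_bound:
  fixes M \<tau> d :: real
  assumes tp: "0 < \<tau>" and Mp: "0 \<le> M" and d1: "1 \<le> d" and h: "\<tau> * M\<^sup>2 < d"
  shows "(1 - exp (- \<tau>))\<^sup>2 * M + (1 - exp (- 2 * \<tau>)) * d \<le> 3 * \<tau> * d"
proof -
  have e1: "1 - exp (- \<tau>) \<le> \<tau>" using exp_ge_add_one_self[of "- \<tau>"] by simp
  have e2: "1 - exp (- \<tau>) \<le> 1" by simp
  have e0: "0 \<le> 1 - exp (- \<tau>)" using tp by simp
  have s1: "1 - exp (- 2 * \<tau>) \<le> 2 * \<tau>" using exp_ge_add_one_self[of "- 2 * \<tau>"] by simp
  have a: "(1 - exp (- \<tau>))\<^sup>2 * M \<le> \<tau> * d"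
  proof (cases "\<tau> \<le> 1")
    case T: True
    have tMd: "\<tau> * M \<le> d"
    proof (cases "M \<le> 1")
      case True
      have "\<tau> * M \<le> 1 * 1" by (rule mult_mono) (use True T Mp in auto)
      then show ?thesis using d1 by simp
    next
      case False
      then have "M \<le> M\<^sup>2" by (simp add: power2_eq_square)
      then have "\<tau> * M \<le> \<tau> * M\<^sup>2" by (rule mult_left_mono) (use tp in auto)
      then show ?thesis using h by simp
    qed
    have "(1 - exp (- \<tau>))\<^sup>2 \<le> \<tau>\<^sup>2" by (rule power_mono) (use e1 e0 in auto)
    then have "(1 - exp (- \<tau>))\<^sup>2 * M \<le> \<tau>\<^sup>2 * M" by (rule mult_right_mono) (use Mp in auto)
    also have "\<tau>\<^sup>2 * M = \<tau> * (\<tau> * M)" by (simp add: power2_eq_square)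
    also have "\<dots> \<le> \<tau> * d" by (rule mult_left_mono) (use tMd tp in auto)
    finally show ?thesis .
  next
    case F: False
    have "(1 - exp (- \<tau>))\<^sup>2 \<le> 1" by (rule power_le_one) (use e2 e0 in auto)
    then have "(1 - exp (- \<tau>))\<^sup>2 * M \<le> 1 * M" by (rule mult_right_mono) (use Mp in auto)
    also have "1 * M \<le> \<tau> * d"
    proof (cases "M \<le> 1")
      case True
      have "1 * 1 \<le> \<tau> * d" by (rule mult_mono) (use F d1 in auto)
      then show ?thesis using True by simp
    next
      case False
      then have "M \<le> M\<^sup>2" by (simp add: power2_eq_square)
      also have "M\<^sup>2 \<le> \<tau> * M\<^sup>2" using mult_right_mono[of 1 \<tau> "M\<^sup>2"] F by simp
      also have "\<dots> \<le> d" using h by simp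
      also have "d = 1 * d" by simp
      also have "\<dots> \<le> \<tau> * d" by (rule mult_right_mono) (use F d1 in auto)
      finally show ?thesis by simp
    qed
    finally show ?thesis .
  qed
  have b: "(1 - exp (- 2 * \<tau>)) * d \<le> 2 * \<tau> * d" by (rule mult_right_mono) (use s1 d1 in auto)
  show ?thesis using a b by simp
qed

theorem lemma1:
  fixes p :: "(real ^ 'd) measure" and M \<tau> :: real
  assumes "prob_space p"
    and "sets p = sets borel"
    and "integrable p (\<lambda>x. (norm x)\<^sup>2)"
    and "M = (\<integral>x. (norm x)\<^sup>2 \<partial>p)"
    and "0 < \<tau>"
    and "\<tau> * M\<^sup>2 < real CARD('d)"
  shows "W2 p (OU_law p \<tau>) \<le> ennreal (sqrt (3 * \<tau> * real CARD('d)))"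
proof -
  note [measurable_cong] = assms(2)
  define G where "G = (std_gaussian :: (real ^ 'd) measure)"
  define d where "d = real CARD('d)"
  define e where "e = exp (- \<tau>)"
  define s where "s = sqrt (1 - exp (- 2 * \<tau>))"
  define a where "a = 1 - e"
  define T where "T = (\<lambda>(x::real^'d, z::real^'d). (x, e *\<^sub>R x + s *\<^sub>R z))"
  define P where "P = p \<Otimes>\<^sub>M G"
  define \<pi> where "\<pi> = distr P (borel \<Otimes>\<^sub>M borel) T"
  have sG[measurable_cong]: "sets G = sets borel" by (simp add: G_def)
  interpret pG: prob_space G unfolding G_def by (rule prob_space_std_gaussian)
  interpret pp: prob_space p by (rule assms(1))
  have probP: "prob_space P" unfolding P_def by (rule prob_space_pair) (fact assms(1), fact pG.prob_space_axioms)
  have Tm[measurable]: "T \<in> P \<rightarrow>\<^sub>M (borel \<Otimes>\<^sub>M borel)"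
    unfolding T_def P_def by measurable
  have s2: "s\<^sup>2 = 1 - exp (- 2 * \<tau>)" unfolding s_def using assms(5) by simp
  have coup: "\<pi> \<in> couplings p (OU_law p \<tau>)"
    unfolding couplings_def
  proof (intro CollectI conjI)
    show "prob_space \<pi>" unfolding \<pi>_def by (rule prob_space.prob_space_distr[OF probP Tm])
    show "sets \<pi> = sets (borel \<Otimes>\<^sub>M borel)" unfolding \<pi>_def by simp
    have "distr \<pi> borel fst = distr P borel (fst \<circ> T)"
      unfolding \<pi>_def by (subst distr_distr) auto
    also have "\<dots> = distr P p fst"
      by (rule distr_cong) (auto simp: T_def assms(2) split_beta)
    also have "\<dots> = p" unfolding P_def by (rule pG.distr_pair_fst)
    finally show "distr \<pi> borel fst = p" .
    have "distr \<pi> borel snd = distr P borel (snd \<circ> T)"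
      unfolding \<pi>_def by (subst distr_distr) auto
    also have "\<dots> = OU_law p \<tau>"
      unfolding OU_law_def P_def G_def
      by (rule distr_cong) (auto simp: T_def split_beta e_def s_def)
    finally show "distr \<pi> borel snd = OU_law p \<tau>" .
  qed
  have Mnn: "0 \<le> M" unfolding assms(4) by simp
  have cost: "(\<integral>\<^sup>+ xy. ennreal ((norm (fst xy - snd xy))\<^sup>2) \<partial>\<pi>) = ennreal (a\<^sup>2 * M + s\<^sup>2 * d)"
  proof -
    have "(\<integral>\<^sup>+ xy. ennreal ((norm (fst xy - snd xy))\<^sup>2) \<partial>\<pi>)
        = (\<integral>\<^sup>+ xz. ennreal ((norm (fst (T xz) - snd (T xz)))\<^sup>2) \<partial>P)"
      unfolding \<pi>_def by (subst nn_integral_distr) auto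
    also have "\<dots> = (\<integral>\<^sup>+ x. \<integral>\<^sup>+ z. ennreal ((norm (a *\<^sub>R x - s *\<^sub>R z))\<^sup>2) \<partial>G \<partial>p)"
      unfolding P_def
      apply (subst pG.nn_integral_fst[symmetric])
       apply (unfold T_def; measurable)
      apply (rule nn_integral_cong)+
      apply (simp add: T_def a_def algebra_simps)
      done
    also have "\<dots> = (\<integral>\<^sup>+ x. ennreal (a\<^sup>2 * (norm x)\<^sup>2 + s\<^sup>2 * d) \<partial>p)"
      apply (rule nn_integral_cong)
      apply (simp add: G_def gauss_sq d_def power_mult_distrib)
      done
    also have "\<dots> = ennreal (a\<^sup>2 * M + s\<^sup>2 * d)"
      apply (subst nn_integral_eq_integral)
        apply (auto intro!: integrable_add integrable_mult_right assms(3))[1]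
       apply (simp add: d_def)
      apply (rule arg_cong[where f=ennreal])
      apply (subst Bochner_Integration.integral_add)
        apply (rule integrable_mult_right, rule assms(3))
       apply simp
      apply (simp add: assms(4)[symmetric])
      apply (rule disjI2, rule disjI2, rule pp.prob_space)
      done
    finally show ?thesis .
  qed
  have bound: "a\<^sup>2 * M + s\<^sup>2 * d \<le> 3 * \<tau> * d"
    unfolding a_def e_def s2 d_def
    by (rule arith_bound) (use assms Mnn in auto)
  have cnn: "0 \<le> a\<^sup>2 * M + s\<^sup>2 * d" using Mnn by (simp add: d_def)
  let ?I = "(INF \<pi> \<in> couplings p (OU_law p \<tau>). \<integral>\<^sup>+ xy. ennreal ((norm (fst xy - snd xy))\<^sup>2) \<partial>\<pi>)"
  have inf: "?I \<le> ennreal (a\<^sup>2 * M + s\<^sup>2 * d)"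
    by (rule INF_lower2[OF coup]) (simp only: cost order_refl)
  have lt: "?I < \<infinity>" using inf by (rule le_less_trans) simp
  then have fin: "?I \<noteq> \<infinity>" by (rule less_imp_neq)
  have "enn2real ?I \<le> enn2real (ennreal (a\<^sup>2 * M + s\<^sup>2 * d))"
    by (rule enn2real_mono[OF inf]) simp
  also have "\<dots> = a\<^sup>2 * M + s\<^sup>2 * d" using cnn by simp
  finally have "enn2real ?I \<le> 3 * \<tau> * d" using bound by linarith
  then have "sqrt (enn2real ?I) \<le> sqrt (3 * \<tau> * d)" by (rule real_sqrt_le_mono)
  then have "ennreal (sqrt (enn2real ?I)) \<le> ennreal (sqrt (3 * \<tau> * d))" by (rule ennreal_leI)
  moreover have "W2 p (OU_law p \<tau>) = ennreal (sqrt (enn2real ?I))"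
    unfolding W2_def ennreal_sqrt_def by (rule if_not_P[OF fin])
  ultimately show ?thesis unfolding d_def by simp
qed

end
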